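(* Let $\Omega$ be the first uncountable ordinal, $[0,\Omega]$ with the order topology, and $X:=[0,\Omega]^2$. Let $Y:=X\times\{\bullet,\uparrow,\downarrow\}/\!\sim$, where $\sim$ identifies all three points $(\Omega,\Omega,t)$, identifies $(\Omega,\alpha,\bullet)$ with $(\Omega,\alpha,\uparrow)$ for all $\alpha\in[0,\Omega]$, and identifies $(\alpha,\Omega,\bullet)$ with $(\alpha,\Omega,\downarrow)$ for all $\alpha\in[0,\Omega]$; let $\pi:Y\to X$ be induced by the first projection. Then $\pi$ is a branched cover with fibers of cardinality $1$ at $(\Omega,\Omega)$, $2$ on $X_2:=\{\Omega\}\times[0,\Omega)\sqcup[0,\Omega)\times\{\Omega\}$, and $3$ on $[0,\Omega)^2$, and all three strata are normal spaces. Moreover, let $\mu_x$ be the uniform probability measure on the two-point fiber $\pi^{-1}(x)$ for $x\in X_2$ and the point mass for $x=(\Omega,\Omega)$. Then there is no weak$^*$-continuous family $x\mapsto\mu_x$, $x\in X$, of probability measures $\mu_x$ on $\pi^{-1}(x)$ (viewed in $C(Y)^*$) extending this family such that $\mu_x$ gives positive mass to every point of $\pi^{-1}(x)$ for all $x\in[0,\Omega)^2$.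
   Context: A branched cover is a continuous open surjection of compact Hausdorff spaces with uniformly bounded finite fibers. A weak$^*$-continuous family of probability measures $\mu_x$ on $\pi^{-1}(x)$ means $x\mapsto\int f\,d\mu_x$ is continuous on $X$ for every $f\in C(Y)$; such families correspond to conditional expectations $C(Y)\to C(X)$. *)

theory Defs
  imports "HOL-Analysis.Analysis"
begin

definition quot_topology :: "'a topology \<Rightarrow> ('a \<Rightarrow> 'b) \<Rightarrow> 'b topology" where
  "quot_topology T q = topology (\<lambda>U. U \<subseteq> q ` topspace T \<and> openin T {p \<in> topspace T. q p \<in> U})"

definition branched_cover :: "'y topology \<Rightarrow> 'x topology \<Rightarrow> ('y \<Rightarrow> 'x) \<Rightarrow> bool" where
  "branched_cover Ytop Xtop \<pi> \<longleftrightarrow>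
     compact_space Ytop \<and> Hausdorff_space Ytop \<and>
     compact_space Xtop \<and> Hausdorff_space Xtop \<and>
     continuous_map Ytop Xtop \<pi> \<and> open_map Ytop Xtop \<pi> \<and>
     \<pi> ` topspace Ytop = topspace Xtop \<and>
     (\<exists>N::nat. \<forall>x\<in>topspace Xtop.
        finite {y \<in> topspace Ytop. \<pi> y = x} \<and> card {y \<in> topspace Ytop. \<pi> y = x} \<le> N)"

definition fiber :: "'y topology \<Rightarrow> ('y \<Rightarrow> 'x) \<Rightarrow> 'x \<Rightarrow> 'y set" where
  "fiber Ytop \<pi> x = {y \<in> topspace Ytop. \<pi> y = x}"

text \<open>A family of probability measures on the (finite) fibers, represented by point masses:
  \<open>\<mu> x y\<close> is the mass of the point \<open>y\<close> for the measure \<open>\<mu>_x\<close>.\<close>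
definition prob_family :: "'y topology \<Rightarrow> 'x topology \<Rightarrow> ('y \<Rightarrow> 'x) \<Rightarrow> ('x \<Rightarrow> 'y \<Rightarrow> real) \<Rightarrow> bool" where
  "prob_family Ytop Xtop \<pi> \<mu> \<longleftrightarrow>
     (\<forall>x\<in>topspace Xtop. (\<forall>y. \<mu> x y \<ge> 0) \<and> (\<forall>y. y \<notin> fiber Ytop \<pi> x \<longrightarrow> \<mu> x y = 0)
        \<and> (\<Sum>y\<in>fiber Ytop \<pi> x. \<mu> x y) = 1)"

definition weak_star_continuous :: "'y topology \<Rightarrow> 'x topology \<Rightarrow> ('y \<Rightarrow> 'x) \<Rightarrow> ('x \<Rightarrow> 'y \<Rightarrow> real) \<Rightarrow> bool" where
  "weak_star_continuous Ytop Xtop \<pi> \<mu> \<longleftrightarrow>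
     (\<forall>f. continuous_map Ytop euclideanreal f \<longrightarrow>
        continuous_map Xtop euclideanreal (\<lambda>x. \<Sum>y\<in>fiber Ytop \<pi> x. \<mu> x y * f y))"

datatype sheet = Dot | Up | Down

text \<open>The space \<open>[0,\<Omega>]\<close> is represented by a well-ordered type carrying the order topology,
  with a greatest element \<open>\<Omega>\<close> having uncountably many predecessors while every
  \<open>\<alpha> < \<Omega>\<close> has only countably many predecessors; this pins down the order type
  \<open>\<omega>\<^sub>1 + 1\<close>.\<close>
definition is_first_uncountable_top :: "'a::{wellorder,linorder_topology} \<Rightarrow> bool" where
  "is_first_uncountable_top \<Omega> \<longleftrightarrow>
     (\<forall>x. x \<le> \<Omega>) \<and> uncountable {x. x < \<Omega>} \<and> (\<forall>a<\<Omega>. countable {x. x < a})"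

definition Xtop :: "('a::topological_space \<times> 'a) topology" where
  "Xtop = prod_topology euclidean euclidean"

definition sheet_rel :: "'a \<Rightarrow> (('a \<times> 'a) \<times> sheet) \<Rightarrow> (('a \<times> 'a) \<times> sheet) \<Rightarrow> bool" where
  "sheet_rel \<Omega> p q \<longleftrightarrow>
     p = q
     \<or> (fst p = (\<Omega>, \<Omega>) \<and> fst q = (\<Omega>, \<Omega>))
     \<or> (fst p = fst q \<and> fst (fst p) = \<Omega> \<and> snd p \<in> {Dot, Up} \<and> snd q \<in> {Dot, Up})
     \<or> (fst p = fst q \<and> snd (fst p) = \<Omega> \<and> snd p \<in> {Dot, Down} \<and> snd q \<in> {Dot, Down})"

definition sheet_class :: "'a \<Rightarrow> (('a \<times> 'a) \<times> sheet) \<Rightarrow> (('a \<times> 'a) \<times> sheet) set" where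
  "sheet_class \<Omega> p = {q. sheet_rel \<Omega> p q}"

definition Ytop :: "'a::topological_space \<Rightarrow> (('a \<times> 'a) \<times> sheet) set topology" where
  "Ytop \<Omega> = quot_topology (prod_topology Xtop (discrete_topology UNIV)) (sheet_class \<Omega>)"

definition proj :: "(('a \<times> 'a) \<times> sheet) set \<Rightarrow> 'a \<times> 'a" where
  "proj c = (THE x. \<exists>s. (x, s) \<in> c)"

end

theory Submission
  imports Defs
begin

locale omg =
  fixes \<Omega> :: "'a::{wellorder,linorder_topology}"
  assumes H: "is_first_uncountable_top \<Omega>"
begin

lemma le_Om: "x \<le> \<Omega>"
  using H unfolding is_first_uncountable_top_def by auto

lemma unc: "uncountable {x. x < \<Omega>}"
  using H unfolding is_first_uncountable_top_def by auto

lemma cnt: "a < \<Omega> \<Longrightarrow> countable {x. x < a}"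
  using H unfolding is_first_uncountable_top_def by auto

lemma ex_below: "\<exists>a. a < \<Omega>"
  using unc by (metis empty_Collect_eq countable_empty)

lemma no_max: assumes "a < \<Omega>" shows "\<exists>w. a < w \<and> w < \<Omega>"
proof (rule ccontr)
  assume "\<not> ?thesis"
  then have "{x. x < \<Omega>} \<subseteq> insert a {x. x < a}"
    by (auto simp: not_less_iff_gr_or_eq)
  moreover have "countable (insert a {x. x < a})" using cnt[OF assms] by simp
  ultimately show False using unc countable_subset by blast
qed

lemma ctbl_bound: assumes "\<And>n::nat. f n < \<Omega>" shows "\<exists>u<\<Omega>. \<forall>n. f n \<le> u"
proof (rule ccontr)
  assume "\<not> ?thesis"
  then have "\<forall>u<\<Omega>. \<exists>n. u < f n" by (auto simp: not_le)
  then have "{x. x < \<Omega>} \<subseteq> (\<Union>n. {x. x < f n})" by blast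
  moreover have "countable (\<Union>n. {x. x < f n})"
    using cnt assms by (intro countable_UN) auto
  ultimately show False using unc countable_subset by blast
qed

lemma open_atMost_below: assumes "t < \<Omega>" shows "open {..t}"
proof -
  define s where "s = (LEAST x. t < x)"
  have ts: "t < s" unfolding s_def by (rule LeastI[of _ \<Omega>]) (rule assms)
  have "{..t} = {..<s}"
  proof safe
    fix x assume "x \<le> t" then show "x < s" using ts by simp
  next
    fix x assume "x < s" then show "x \<le> t"
      using not_less_Least[of x "\<lambda>x. t < x"] unfolding s_def by (simp add: not_less)
  qed
  then show ?thesis by simp
qed

lemma compact_UNIV: "compact (UNIV :: 'a set)"
proof (rule compactI)
  fix C :: "'a set set" assume C: "\<forall>t\<in>C. open t" "UNIV \<subseteq> \<Union>C"
  have "\<exists>D\<subseteq>C. finite D \<and> {..x} \<subseteq> \<Union>D" for x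
  proof (induction x rule: less_induct)
    case (less x)
    obtain U where U: "U \<in> C" "x \<in> U" using C by blast
    show ?case
    proof (cases "\<exists>y. y < x")
      case True
      then obtain y where "y < x" by blast
      from open_left[OF _ U(2) this] C U obtain b where b: "b < x" "{b<..x} \<subseteq> U" by blast
      from less[OF b(1)] obtain D where D: "D \<subseteq> C" "finite D" "{..b} \<subseteq> \<Union>D" by blast
      have "{..x} \<subseteq> \<Union>(insert U D)"
      proof
        fix z assume "z \<in> {..x}"
        then show "z \<in> \<Union>(insert U D)" using D b by (cases "z \<le> b") auto
      qed
      then show ?thesis using D U by (intro exI[of _ "insert U D"]) auto
    next
      case False
      then have "{..x} \<subseteq> U" using U False by (metis atMost_iff order_le_less subsetI)
      then show ?thesis using U by (intro exI[of _ "{U}"]) auto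
    qed
  qed
  from this[of \<Omega>] show "\<exists>C'\<subseteq>C. finite C' \<and> UNIV \<subseteq> \<Union>C'"
    using le_Om by (metis atMost_iff subsetI subset_trans)
qed

lemma dseq: assumes "t < \<Omega>"
  shows "\<exists>d::nat\<Rightarrow>'a. (\<forall>n. d n \<le> t) \<and> ((\<exists>y. y < t) \<longrightarrow> (\<forall>n. d n < t))
     \<and> (\<forall>c<t. \<exists>N. \<forall>n\<ge>N. c \<le> d n)"
proof (cases "\<exists>y. y < t")
  case False
  then show ?thesis by (intro exI[of _ "\<lambda>n. t"]) auto
next
  case True
  define S where "S = {x. x < t}"
  have S: "countable S" "S \<noteq> {}" using cnt[OF assms] True by (auto simp: S_def)
  define e where "e = from_nat_into S"
  have eS: "e n \<in> S" for n using S by (simp add: e_def from_nat_into)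
  have Se: "c \<in> S \<Longrightarrow> \<exists>k. e k = c" for c using S by (metis e_def from_nat_into_surj)
  define d where "d n = Max (e ` {..n})" for n
  have dS: "d n \<in> S" for n unfolding d_def using eS
    by (metis (no_types, lifting) Max_in atMost_iff empty_iff finite_atMost finite_imageI image_iff image_is_empty order_refl)
  have dge: "k \<le> n \<Longrightarrow> e k \<le> d n" for k n unfolding d_def by (intro Max_ge) auto
  show ?thesis
  proof (intro exI[of _ d] conjI allI impI)
    fix n show "d n \<le> t" "d n < t" using dS[of n] by (auto simp: S_def)
  next
    fix c assume "c < t"
    then obtain k where "e k = c" using Se by (auto simp: S_def)
    then show "\<exists>N. \<forall>n\<ge>N. c \<le> d n" using dge by blast
  qed
qed

end


lemma istop_quot: "istopology (\<lambda>U. U \<subseteq> q ` topspace T \<and> openin T {p \<in> topspace T. q p \<in> U})"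
proof -
  have 1: "{p \<in> topspace T. q p \<in> S \<inter> U} = {p \<in> topspace T. q p \<in> S} \<inter> {p \<in> topspace T. q p \<in> U}" for S U by auto
  have 2: "{p \<in> topspace T. q p \<in> \<Union>K} = (\<Union>S\<in>K. {p \<in> topspace T. q p \<in> S})" for K by auto
  show ?thesis unfolding istopology_def 1 2 by (auto intro!: openin_Union)
qed

lemma openin_quot: "openin (quot_topology T q) U \<longleftrightarrow> U \<subseteq> q ` topspace T \<and> openin T {p \<in> topspace T. q p \<in> U}"
  unfolding quot_topology_def by (simp add: topology_inverse'[OF istop_quot])

lemma topspace_quot: "topspace (quot_topology T q) = q ` topspace T"
proof -
  have e: "{p \<in> topspace T. q p \<in> q ` topspace T} = topspace T" by auto
  have "openin (quot_topology T q) (q ` topspace T)" unfolding openin_quot e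
    by auto
  then have "q ` topspace T \<subseteq> topspace (quot_topology T q)" by (rule openin_subset)
  moreover have "topspace (quot_topology T q) \<subseteq> q ` topspace T"
    by (metis openin_quot openin_topspace)
  ultimately show ?thesis by blast
qed

lemma cont_quot: "continuous_map T (quot_topology T q) q"
  by (auto simp: continuous_map_def topspace_quot openin_quot)

lemma cont_from_quot:
  assumes "continuous_map T Z (\<lambda>p. f (q p))"
  shows "continuous_map (quot_topology T q) Z f"
  unfolding continuous_map_def topspace_quot
proof (intro conjI allI impI)
  show "f \<in> q ` topspace T \<rightarrow> topspace Z" using assms by (auto simp: continuous_map_def)
next
  fix V assume V: "openin Z V"
  have "{p \<in> topspace T. q p \<in> {c \<in> q ` topspace T. f c \<in> V}} = {p \<in> topspace T. f (q p) \<in> V}"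
    by auto
  then show "openin (quot_topology T q) {c \<in> q ` topspace T. f c \<in> V}"
    unfolding openin_quot using assms V by (auto simp: continuous_map_def)
qed

lemma openin_quot_sat:
  assumes "openin T A" "\<And>p p'. p \<in> A \<Longrightarrow> p' \<in> topspace T \<Longrightarrow> q p' = q p \<Longrightarrow> p' \<in> A"
  shows "openin (quot_topology T q) (q ` A)"
proof -
  have "{p \<in> topspace T. q p \<in> q ` A} = A" using assms openin_subset by fastforce
  then show ?thesis unfolding openin_quot using assms openin_subset by fastforce
qed



lemma sheet_UNIV: "(UNIV :: sheet set) = {Dot, Up, Down}"
  using sheet.exhaust by auto

lemma Xtop_eq: "Xtop = euclidean" by (simp add: Xtop_def)

context omg begin

abbreviation "rel \<equiv> sheet_rel \<Omega>"
abbreviation "cls \<equiv> sheet_class \<Omega>"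
abbreviation "Q \<equiv> prod_topology (euclidean::('a\<times>'a) topology) (discrete_topology (UNIV::sheet set))"

lemma Ytop_eq: "Ytop \<Omega> = quot_topology Q cls"
  by (simp add: Ytop_def Xtop_eq)

lemma topQ: "topspace Q = UNIV" by simp

lemma rel_iff: "rel (x,s) (x',s') \<longleftrightarrow> x' = x \<and> (s = s' \<or> x = (\<Omega>,\<Omega>) \<or>
   (fst x = \<Omega> \<and> s\<in>{Dot,Up} \<and> s'\<in>{Dot,Up}) \<or> (snd x = \<Omega> \<and> s\<in>{Dot,Down} \<and> s'\<in>{Dot,Down}))"
  unfolding sheet_rel_def by auto

lemma rel_refl: "rel p p" unfolding sheet_rel_def by auto
lemma rel_sym: "rel p p' \<Longrightarrow> rel p' p" 
  by (cases p; cases p'; auto simp: rel_iff)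
lemma rel_trans: "rel p p' \<Longrightarrow> rel p' p'' \<Longrightarrow> rel p p''" 
  by (cases p; cases p'; cases p''; auto simp: rel_iff)

lemma cls_eq: "cls p = cls p' \<longleftrightarrow> rel p p'"
proof
  assume "cls p = cls p'"
  then have "p' \<in> cls p" using rel_refl by (auto simp: sheet_class_def)
  then show "rel p p'" by (auto simp: sheet_class_def)
next
  assume "rel p p'"
  then show "cls p = cls p'" unfolding sheet_class_def using rel_sym rel_trans by blast
qed

lemma proj_cls: "proj (cls p) = fst p"
proof -
  obtain x s where p: "p = (x,s)" by fastforce
  have "(THE x'. \<exists>s'. (x', s') \<in> cls (x,s)) = x"
  proof (rule the_equality)
    show "\<exists>s'. (x, s') \<in> cls (x, s)" unfolding sheet_class_def using rel_refl by blast
  next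
    fix x' assume "\<exists>s'. (x', s') \<in> cls (x, s)"
    then show "x' = x" by (auto simp: sheet_class_def rel_iff)
  qed
  then show ?thesis by (simp add: p proj_def)
qed

lemma topY: "topspace (Ytop \<Omega>) = range cls"
  by (simp add: Ytop_eq topspace_quot)

lemma fiberY: "fiber (Ytop \<Omega>) proj x = {cls (x,Dot), cls (x,Up), cls (x,Down)}"
proof -
  have "fiber (Ytop \<Omega>) proj x = cls ` ({x} \<times> UNIV)"
    unfolding fiber_def topY by (auto simp: proj_cls)
  then show ?thesis by (simp add: sheet_UNIV)
qed

lemma fiber3: assumes "fst x < \<Omega>" "snd x < \<Omega>"
  shows "card (fiber (Ytop \<Omega>) proj x) = 3"
    "fiber (Ytop \<Omega>) proj x = {cls (x,Dot), cls (x,Up), cls (x,Down)}"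
    "cls (x,Dot) \<noteq> cls (x,Up)" "cls (x,Dot) \<noteq> cls (x,Down)" "cls (x,Up) \<noteq> cls (x,Down)"
proof -
  show d: "cls (x,Dot) \<noteq> cls (x,Up)" "cls (x,Dot) \<noteq> cls (x,Down)" "cls (x,Up) \<noteq> cls (x,Down)"
    using assms by (auto simp: cls_eq rel_iff)
  show "card (fiber (Ytop \<Omega>) proj x) = 3" using d by (simp add: fiberY)
  show "fiber (Ytop \<Omega>) proj x = {cls (x,Dot), cls (x,Up), cls (x,Down)}" by (rule fiberY)
qed

lemma fiber2a: assumes "fst x = \<Omega>" "snd x < \<Omega>"
  shows "fiber (Ytop \<Omega>) proj x = {cls (x,Dot), cls (x,Down)}" "cls (x,Dot) \<noteq> cls (x,Down)"
    "cls (x,Up) = cls (x,Dot)"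
proof -
  show e: "cls (x,Up) = cls (x,Dot)" using assms by (auto simp: cls_eq rel_iff)
  show "cls (x,Dot) \<noteq> cls (x,Down)" using assms by (cases x) (auto simp: cls_eq rel_iff)
  show "fiber (Ytop \<Omega>) proj x = {cls (x,Dot), cls (x,Down)}" using e by (auto simp: fiberY)
qed

lemma fiber2b: assumes "fst x < \<Omega>" "snd x = \<Omega>"
  shows "fiber (Ytop \<Omega>) proj x = {cls (x,Dot), cls (x,Up)}" "cls (x,Dot) \<noteq> cls (x,Up)"
    "cls (x,Down) = cls (x,Dot)"
proof -
  show e: "cls (x,Down) = cls (x,Dot)" using assms by (auto simp: cls_eq rel_iff)
  show "cls (x,Dot) \<noteq> cls (x,Up)" using assms by (cases x) (auto simp: cls_eq rel_iff)
  show "fiber (Ytop \<Omega>) proj x = {cls (x,Dot), cls (x,Up)}" using e by (auto simp: fiberY)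
qed

lemma fiber1: "fiber (Ytop \<Omega>) proj (\<Omega>,\<Omega>) = {cls ((\<Omega>,\<Omega>),Dot)}"
proof -
  have "cls ((\<Omega>,\<Omega>),Up) = cls ((\<Omega>,\<Omega>),Dot)" "cls ((\<Omega>,\<Omega>),Down) = cls ((\<Omega>,\<Omega>),Dot)"
    by (auto simp: cls_eq rel_iff)
  then show ?thesis by (simp add: fiberY)
qed

lemma fiber_le3: "finite (fiber (Ytop \<Omega>) proj x) \<and> card (fiber (Ytop \<Omega>) proj x) \<le> 3"
  by (simp add: fiberY card_insert_if)

end


lemma Hausdorff_eu: "Hausdorff_space (euclidean :: 'b::t2_space topology)"
  unfolding Hausdorff_space_def disjnt_def
proof (intro allI impI)
  fix x y :: 'b assume "x \<in> topspace euclidean \<and> y \<in> topspace euclidean \<and> x \<noteq> y"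
  then show "\<exists>U V. openin euclidean U \<and> openin euclidean V \<and> x \<in> U \<and> y \<in> V \<and> U \<inter> V = {}"
    using hausdorff[of x y] by auto
qed

context omg begin

lemma compact_XX: "compact (UNIV :: ('a\<times>'a) set)"
  using compact_Times[OF compact_UNIV compact_UNIV] by simp

lemma compact_X: "compact_space (euclidean :: ('a\<times>'a) topology)"
  by (simp add: compact_space_def compact_XX)

lemma compact_Q: "compact_space Q"
  using compact_X by (simp add: compact_space_prod_topology compact_space_discrete_topology sheet_UNIV)

lemma compact_Y: "compact_space (Ytop \<Omega>)"
proof -
  have "compactin (quot_topology Q cls) (cls ` topspace Q)"
    using image_compactin[OF compact_Q[unfolded compact_space_def] cont_quot] .
  then show ?thesis by (simp add: compact_space_def Ytop_eq topspace_quot)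
qed

definition sat :: "(('a\<times>'a)\<times>sheet) set \<Rightarrow> bool" where
  "sat A \<longleftrightarrow> (\<forall>p p'. p \<in> A \<longrightarrow> rel p p' \<longrightarrow> p' \<in> A)"

lemma open_sat: assumes "openin Q A" "sat A" shows "openin (Ytop \<Omega>) (cls ` A)"
  unfolding Ytop_eq
  by (rule openin_quot_sat[OF assms(1)]) (use assms(2) in \<open>unfold sat_def, metis cls_eq\<close>)

lemma mem_sat: assumes "sat A" shows "cls p \<in> cls ` A \<longleftrightarrow> p \<in> A"
  using assms unfolding sat_def by (metis cls_eq image_iff)

lemma openQ: "open N \<Longrightarrow> openin Q (N \<times> E)"
  by (simp add: openin_prod_Times_iff)

end


context omg begin

lemma sat_box:
  assumes "\<And>y s s'. y \<in> N \<Longrightarrow> s \<in> E \<Longrightarrow> rel (y,s) (y,s') \<Longrightarrow> s' \<in> E"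
  shows "sat (N \<times> E)"
  unfolding sat_def
proof (intro allI impI)
  fix p p' assume p: "p \<in> N \<times> E" "rel p p'"
  obtain y s y' s' where pp: "p = (y,s)" "p' = (y',s')" by fastforce
  have "y' = y" using p(2) unfolding pp by (simp add: rel_iff)
  then show "p' \<in> N \<times> E" using p assms[of y s s'] unfolding pp by auto
qed

lemma sep_gen:
  assumes "open N" "x \<in> N" "s1 \<in> Ea" "s2 \<in> Eb" "Ea \<inter> Eb = {}"
    "\<And>y s s'. y \<in> N \<Longrightarrow> s \<in> Ea \<Longrightarrow> rel (y,s) (y,s') \<Longrightarrow> s' \<in> Ea"
    "\<And>y s s'. y \<in> N \<Longrightarrow> s \<in> Eb \<Longrightarrow> rel (y,s) (y,s') \<Longrightarrow> s' \<in> Eb"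
  shows "\<exists>U V. openin (Ytop \<Omega>) U \<and> openin (Ytop \<Omega>) V \<and> cls (x,s1) \<in> U \<and> cls (x,s2) \<in> V \<and> disjnt U V"
proof -
  have s1: "sat (N \<times> Ea)" by (rule sat_box) (rule assms(6))
  have s2: "sat (N \<times> Eb)" by (rule sat_box) (rule assms(7))
  have d: "disjnt (cls ` (N \<times> Ea)) (cls ` (N \<times> Eb))"
    unfolding disjnt_def
  proof (rule equals0I)
    fix c assume "c \<in> cls ` (N \<times> Ea) \<inter> cls ` (N \<times> Eb)"
    then obtain p' where p': "p' \<in> N \<times> Eb" "cls p' \<in> cls ` (N \<times> Ea)" by blast
    then have "p' \<in> N \<times> Ea" using mem_sat[OF s1] by blast
    then show False using p'(1) assms(5) by auto
  qed
  have "cls (x,s1) \<in> cls ` (N \<times> Ea)" "cls (x,s2) \<in> cls ` (N \<times> Eb)" using assms(2-4) by auto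
  then show ?thesis
    using open_sat[OF openQ[OF assms(1)] s1] open_sat[OF openQ[OF assms(1)] s2] d by blast
qed

end


context omg begin

lemma Hausdorff_Y: "Hausdorff_space (Ytop \<Omega>)"
  unfolding Hausdorff_space_def topY
proof (intro allI impI, elim conjE)
  fix c1 c2 assume c12: "c1 \<in> range cls" "c2 \<in> range cls" "c1 \<noteq> c2"
  obtain p1 where c1: "c1 = cls p1" using c12(1) by (rule rangeE)
  obtain p2 where c2: "c2 = cls p2" using c12(2) by (rule rangeE)
  note c = c1 c2
  obtain x1 s1 where p1: "p1 = (x1,s1)" by (cases p1)
  obtain x2 s2 where p2: "p2 = (x2,s2)" by (cases p2)
  have ne: "cls (x1,s1) \<noteq> cls (x2,s2)" using c12(3) unfolding c p1 p2 .
  show "\<exists>U V. openin (Ytop \<Omega>) U \<and> openin (Ytop \<Omega>) V \<and> c1 \<in> U \<and> c2 \<in> V \<and> disjnt U V"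
  proof (cases "x1 = x2")
    case False
    then obtain U1 U2 where U: "open U1" "open U2" "x1 \<in> U1" "x2 \<in> U2" "U1 \<inter> U2 = {}"
      using hausdorff[OF False] by blast
    have sat: "sat (U \<times> (UNIV::sheet set))" for U by (rule sat_box) simp
    have d: "disjnt (cls ` (U1 \<times> UNIV)) (cls ` (U2 \<times> UNIV))"
      unfolding disjnt_def
    proof (rule equals0I)
      fix c assume "c \<in> cls ` (U1 \<times> UNIV) \<inter> cls ` (U2 \<times> UNIV)"
      then obtain p' where p': "p' \<in> U2 \<times> UNIV" "cls p' \<in> cls ` (U1 \<times> UNIV)" by blast
      then have "p' \<in> U1 \<times> UNIV" using mem_sat[OF sat] by blast
      then show False using p'(1) U(5) by auto
    qed
    have "c1 \<in> cls ` (U1 \<times> UNIV)" "c2 \<in> cls ` (U2 \<times> UNIV)"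
      unfolding c p1 p2 using U(3,4) by (auto intro!: imageI)
    then show ?thesis using open_sat[OF openQ[OF U(1)] sat] open_sat[OF openQ[OF U(2)] sat] d
      by (intro exI conjI) assumption+
  next
    case True
    then have nr: "\<not> rel (x1,s1) (x1,s2)" using ne by (simp add: cls_eq)
    obtain a b where x: "x1 = (a,b)" by fastforce
    have cases: "(a < \<Omega> \<and> b < \<Omega>) \<or> (a = \<Omega> \<and> b < \<Omega>) \<or> (a < \<Omega> \<and> b = \<Omega>) \<or> (a = \<Omega> \<and> b = \<Omega>)"
      using le_Om[of a] le_Om[of b] by (auto simp: order_le_less)
    have "\<exists>U V. openin (Ytop \<Omega>) U \<and> openin (Ytop \<Omega>) V \<and> cls (x1,s1) \<in> U \<and> cls (x1,s2) \<in> V \<and> disjnt U V"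
    proof -
      { assume h: "a < \<Omega>" "b < \<Omega>"
        have ?thesis
          apply (rule sep_gen[where N="{..<\<Omega>} \<times> {..<\<Omega>}" and Ea="{s1}" and Eb="{s2}"])
          subgoal by (simp add: open_Times)
          subgoal using h x by simp
          subgoal by simp
          subgoal by simp
          subgoal using nr x by (auto simp: rel_iff)
          subgoal for y s s' by (cases y) (auto simp: rel_iff)
          subgoal for y s s' by (cases y) (auto simp: rel_iff)
          done }
      moreover
      { assume h: "a = \<Omega>" "b < \<Omega>"
        have ?thesis
          apply (rule sep_gen[where N="UNIV \<times> {..<\<Omega>}" and Ea="if s1 = Down then {Down} else {Dot,Up}" 
                               and Eb="if s2 = Down then {Down} else {Dot,Up}"])
          subgoal by (simp add: open_Times)
          subgoal using h x by simp
          subgoal by (cases s1) auto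
          subgoal by (cases s2) auto
          subgoal using nr x h by (cases s1; cases s2) (simp_all add: rel_iff)
          subgoal for y s s' by (cases y; cases s; cases s'; cases s1) (auto simp: rel_iff)
          subgoal for y s s' by (cases y; cases s; cases s'; cases s2) (auto simp: rel_iff)
          done }
      moreover
      { assume h: "a < \<Omega>" "b = \<Omega>"
        have ?thesis
          apply (rule sep_gen[where N="{..<\<Omega>} \<times> UNIV" and Ea="if s1 = Up then {Up} else {Dot,Down}" 
                               and Eb="if s2 = Up then {Up} else {Dot,Down}"])
          subgoal by (simp add: open_Times)
          subgoal using h x by simp
          subgoal by (cases s1) auto
          subgoal by (cases s2) auto
          subgoal using nr x h by (cases s1; cases s2) (simp_all add: rel_iff)
          subgoal for y s s' by (cases y; cases s; cases s'; cases s1) (auto simp: rel_iff)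
          subgoal for y s s' by (cases y; cases s; cases s'; cases s2) (auto simp: rel_iff)
          done }
      moreover
      { assume h: "a = \<Omega>" "b = \<Omega>"
        have ?thesis using nr x h by (simp add: rel_iff) }
      ultimately show ?thesis using cases by blast
    qed
    then show ?thesis using c p1 p2 True by simp
  qed
qed

lemma cont_proj: "continuous_map (Ytop \<Omega>) Xtop proj"
  unfolding Ytop_eq Xtop_eq
  by (rule cont_from_quot) (simp add: proj_cls, rule continuous_map_fst)

lemma open_proj: "open_map (Ytop \<Omega>) Xtop proj"
  unfolding open_map_def
proof (intro allI impI)
  fix U assume U: "openin (Ytop \<Omega>) U"
  then have U': "U \<subseteq> range cls" "openin Q {p \<in> topspace Q. cls p \<in> U}"
    using U unfolding Ytop_eq openin_quot topQ by simp_all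
  have "proj ` U = fst ` {p \<in> topspace Q. cls p \<in> U}"
  proof
    show "proj ` U \<subseteq> fst ` {p \<in> topspace Q. cls p \<in> U}"
    proof
      fix z assume "z \<in> proj ` U"
      then obtain c where c: "c \<in> U" "z = proj c" by blast
      then obtain p where "c = cls p" using U'(1) by blast
      then show "z \<in> fst ` {p \<in> topspace Q. cls p \<in> U}" using c proj_cls by auto
    qed
    show "fst ` {p \<in> topspace Q. cls p \<in> U} \<subseteq> proj ` U"
    proof
      fix z assume "z \<in> fst ` {p \<in> topspace Q. cls p \<in> U}"
      then obtain p where "cls p \<in> U" "z = fst p" by auto
      then show "z \<in> proj ` U" using proj_cls[of p] by (metis rev_image_eqI)
    qed
  qed
  moreover have "openin euclidean (fst ` {p \<in> topspace Q. cls p \<in> U})"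
    using open_map_fst[of "euclidean::('a\<times>'a) topology" "discrete_topology (UNIV::sheet set)"] U'(2)
    unfolding open_map_def by blast
  ultimately show "openin Xtop (proj ` U)" by (simp add: Xtop_eq)
qed

lemma branched: "branched_cover (Ytop \<Omega>) Xtop proj"
  unfolding branched_cover_def
proof (intro conjI)
  show "compact_space (Ytop \<Omega>)" by (rule compact_Y)
  show "Hausdorff_space (Ytop \<Omega>)" by (rule Hausdorff_Y)
  show "compact_space (Xtop :: ('a\<times>'a) topology)" unfolding Xtop_eq compact_space_def using compact_XX by simp
  show "Hausdorff_space (Xtop :: ('a\<times>'a) topology)" by (simp add: Xtop_eq Hausdorff_eu)
  show "continuous_map (Ytop \<Omega>) Xtop proj" by (rule cont_proj)
  show "open_map (Ytop \<Omega>) Xtop proj" by (rule open_proj)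
  show "proj ` topspace (Ytop \<Omega>) = topspace Xtop"
  proof -
    have "x \<in> proj ` range cls" for x using proj_cls[of "(x,Dot)"] by (metis fst_conv rangeI rev_image_eqI)
    then show ?thesis by (auto simp: topY Xtop_eq)
  qed
  show "\<exists>N. \<forall>x\<in>topspace Xtop. finite {y \<in> topspace (Ytop \<Omega>). proj y = x} \<and> card {y \<in> topspace (Ytop \<Omega>). proj y = x} \<le> N"
    using fiber_le3 unfolding fiber_def by (intro exI[of _ 3]) blast
qed

end


lemma in_closureI:
  assumes "\<And>W. open W \<Longrightarrow> q \<in> W \<Longrightarrow> W \<inter> S \<noteq> {}" shows "q \<in> closure S"
proof (rule ccontr)
  assume "q \<notin> closure S"
  then have "open (- closure S)" "q \<in> - closure S" by auto
  then have "(- closure S) \<inter> S \<noteq> {}" by (rule assms)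
  then show False using closure_subset by blast
qed

lemma in_closureD: "open W \<Longrightarrow> q \<in> W \<Longrightarrow> q \<in> closure S \<Longrightarrow> W \<inter> S \<noteq> {}"
  using open_Int_closure_eq_empty by blast

context omg begin

definition Nb :: "'a \<Rightarrow> 'a \<Rightarrow> 'a set" where
  "Nb t l = (if t = \<Omega> then {l<..} else {x. x \<le> t \<and> (l < t \<longrightarrow> l < x)})"

lemma Nb_open: "open (Nb t l)"
proof (cases "t = \<Omega>")
  case True then show ?thesis by (simp add: Nb_def)
next
  case False
  have t: "t < \<Omega>" using le_Om[of t] False by (rule order_le_neq_trans)
  show ?thesis
  proof (cases "l < t")
    case True
    have "Nb t l = {..t} \<inter> {l<..}" unfolding Nb_def using False True by (intro set_eqI) simp
    then show ?thesis using open_atMost_below[OF t] open_greaterThan by (metis open_Int)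
  next
    case F2: False
    have "Nb t l = {..t}" unfolding Nb_def using False F2 by (intro set_eqI) simp
    then show ?thesis using open_atMost_below[OF t] by simp
  qed
qed

lemma Nb_mem: "(t = \<Omega> \<Longrightarrow> l < \<Omega>) \<Longrightarrow> t \<in> Nb t l"
  by (auto simp: Nb_def)

lemma coord_conv:
  fixes d m zc :: "nat \<Rightarrow> 'a" and lam :: 'a
  assumes dprop: "t < \<Omega> \<Longrightarrow> (\<forall>n. d n \<le> t) \<and> ((\<exists>y. y<t) \<longrightarrow> (\<forall>n. d n < t)) \<and> (\<forall>c<t. \<exists>N. \<forall>n\<ge>N. c \<le> d n)"
    and zin: "\<And>n. zc n \<in> Nb t (if t = \<Omega> then m n else d n)"
    and zle: "\<And>n. zc n \<le> m (Suc n)"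
    and mmono: "\<And>n. m n \<le> m (Suc n)"
    and lam: "\<And>n. m n \<le> lam" and lamleast: "\<And>u. (\<forall>n. m n \<le> u) \<Longrightarrow> lam \<le> u"
    and U: "open U" "(if t = \<Omega> then lam else t) \<in> U"
  shows "\<exists>N. \<forall>n\<ge>N. zc n \<in> U"
proof (cases "t = \<Omega>")
  case True
  then have zgt: "m n < zc n" for n using zin[of n] by (simp add: Nb_def)
  have lamU: "lam \<in> U" using U True by simp
  have "m 0 < lam" using zgt[of 0] zle[of 0] lam[of 1] by simp
  from open_left[OF U(1) lamU this] obtain c where c: "c < lam" "{c<..lam} \<subseteq> U" by blast
  have "\<exists>N. c < m N"
  proof (rule ccontr)
    assume "\<not> ?thesis" then have "\<forall>n. m n \<le> c" by (simp add: not_less)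
    then have "lam \<le> c" by (rule lamleast)
    then show False using c(1) by simp
  qed
  then obtain N where N: "c < m N" by blast
  have "zc n \<in> U" if "n \<ge> N" for n
  proof -
    have "m N \<le> m n" using lift_Suc_mono_le[of m, OF mmono that] .
    then have "c < zc n" using N zgt[of n] by simp
    moreover have "zc n \<le> lam" using zle[of n] lam[of "Suc n"] by simp
    ultimately show ?thesis using c(2) by auto
  qed
  then show ?thesis by blast
next
  case False
  have t: "t < \<Omega>" using le_Om[of t] False by (rule order_le_neq_trans)
  have zin': "zc n \<le> t \<and> (d n < t \<longrightarrow> d n < zc n)" for n using zin[of n] False by (simp add: Nb_def)
  have tU: "t \<in> U" using U False by simp
  show ?thesis
  proof (cases "\<exists>y. y < t")
    case True
    then obtain y where "y < t" by blast
    from open_left[OF U(1) tU this] obtain c where c: "c < t" "{c<..t} \<subseteq> U" by blast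
    from dprop[OF t] c(1) True obtain N where N: "\<forall>n\<ge>N. c \<le> d n" and dl: "\<forall>n. d n < t" by blast
    have "zc n \<in> U" if "n \<ge> N" for n
    proof -
      have "c \<le> d n" "d n < zc n" "zc n \<le> t" using N that dl zin'[of n] by auto
      then have "zc n \<in> {c<..t}" by simp
      then show ?thesis using c(2) by blast
    qed
    then show ?thesis by blast
  next
    case F2: False
    have "zc n = t" for n using zin'[of n] F2 by (simp add: order_le_less)
    then show ?thesis using tU by simp
  qed
qed

end


context omg begin

abbreviation "L \<equiv> {x. x < \<Omega>}"

lemma key:
  assumes AX: "A \<subseteq> L \<times> L" and BX: "B \<subseteq> L \<times> L" and AB: "A \<inter> B = {}"
    and cA: "closure A \<inter> (L \<times> L) \<subseteq> A" and cB: "closure B \<inter> (L \<times> L) \<subseteq> B"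
  shows "closure A \<inter> closure B = {}"
proof (rule ccontr)
  assume "closure A \<inter> closure B \<noteq> {}"
  then obtain p1 p2 where pA: "(p1,p2) \<in> closure A" and pB: "(p1,p2) \<in> closure B" by auto
  have dex: "\<exists>d::nat\<Rightarrow>'a. t < \<Omega> \<longrightarrow> ((\<forall>n. d n \<le> t) \<and> ((\<exists>y. y<t) \<longrightarrow> (\<forall>n. d n < t)) \<and> (\<forall>c<t. \<exists>N. \<forall>n\<ge>N. c \<le> d n))" for t
  proof (cases "t < \<Omega>")
    case True then show ?thesis using dseq[OF True] by simp
  next
    case False then show ?thesis by simp
  qed
  from dex[of p1] obtain d1 :: "nat \<Rightarrow> 'a" where d1': "p1 < \<Omega> \<longrightarrow> (\<forall>n. d1 n \<le> p1) \<and> ((\<exists>y. y<p1) \<longrightarrow> (\<forall>n. d1 n < p1)) \<and> (\<forall>c<p1. \<exists>N. \<forall>n\<ge>N. c \<le> d1 n)"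
    ..
  note d1 = mp[OF d1']
  from dex[of p2] obtain d2 :: "nat \<Rightarrow> 'a" where d2': "p2 < \<Omega> \<longrightarrow> (\<forall>n. d2 n \<le> p2) \<and> ((\<exists>y. y<p2) \<longrightarrow> (\<forall>n. d2 n < p2)) \<and> (\<forall>c<p2. \<exists>N. \<forall>n\<ge>N. c \<le> d2 n)"
    ..
  note d2 = mp[OF d2']
  define box where "box n m = Nb p1 (if p1 = \<Omega> then m else d1 n) \<times> Nb p2 (if p2 = \<Omega> then m else d2 n)" for n m
  define S where "S n = (if even n then A else B)" for n :: nat
  have box_open: "open (box n m)" for n m unfolding box_def by (intro open_Times Nb_open)
  have box_mem: "m < \<Omega> \<Longrightarrow> (p1,p2) \<in> box n m" for n m unfolding box_def by (auto intro!: Nb_mem)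
  have pS: "(p1,p2) \<in> closure (S n)" for n using pA pB by (simp add: S_def)
  have ex: "m < \<Omega> \<Longrightarrow> \<exists>z. z \<in> S n \<inter> box n m" for n m
    using in_closureD[OF box_open box_mem pS] by blast
  define Z where "Z n m = (SOME z. z \<in> S n \<inter> box n m)" for n m
  have Z: "m < \<Omega> \<Longrightarrow> Z n m \<in> S n \<inter> box n m" for n m unfolding Z_def by (rule someI_ex[OF ex])
  obtain a0 where a0: "a0 < \<Omega>" using ex_below by blast
  define m where "m = rec_nat a0 (\<lambda>n mm. max mm (max (fst (Z n mm)) (snd (Z n mm))))"
  have m0: "m 0 = a0" by (simp add: m_def)
  have mS: "m (Suc n) = max (m n) (max (fst (Z n (m n))) (snd (Z n (m n))))" for n by (simp add: m_def)
  define z where "z n = Z n (m n)" for n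
  have SX: "S n \<subseteq> L \<times> L" for n using AX BX by (simp add: S_def)
  have mlt: "m n < \<Omega>" for n
  proof (induction n)
    case 0 then show ?case using a0 m0 by simp
  next
    case (Suc n)
    have "Z n (m n) \<in> L \<times> L" using Z[OF Suc] SX by blast
    then show ?case using Suc by (auto simp: mS)
  qed
  have zS: "z n \<in> S n" "z n \<in> box n (m n)" for n using Z[OF mlt] by (auto simp: z_def)
  have mmono: "m n \<le> m (Suc n)" for n by (simp add: mS)
  have zle1: "fst (z n) \<le> m (Suc n)" for n by (simp add: mS z_def le_max_iff_disj)
  have zle2: "snd (z n) \<le> m (Suc n)" for n by (simp add: mS z_def le_max_iff_disj)
  obtain u where u: "u < \<Omega>" "\<forall>n. m n \<le> u" using ctbl_bound[of m, OF mlt] by blast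
  define lam where "lam = (LEAST u. \<forall>n. m n \<le> u)"
  have lam: "\<forall>n. m n \<le> lam" unfolding lam_def by (rule LeastI[of _ u]) (rule u(2))
  have lamleast: "(\<forall>n. m n \<le> v) \<Longrightarrow> lam \<le> v" for v unfolding lam_def by (rule Least_le)
  have lamlt: "lam < \<Omega>" using lamleast[OF u(2)] u(1) by simp
  define q where "q = (if p1 = \<Omega> then lam else p1, if p2 = \<Omega> then lam else p2)"
  have qX: "q \<in> L \<times> L"
    using le_Om[of p1] le_Om[of p2] lamlt unfolding q_def by (auto simp: order_le_less)
  have conv: "\<exists>N. \<forall>n\<ge>N. z n \<in> U1 \<times> U2" if U: "open U1" "open U2" "q \<in> U1 \<times> U2" for U1 U2
  proof -
    have "\<exists>N. \<forall>n\<ge>N. fst (z n) \<in> U1"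
    proof (rule coord_conv[where t=p1 and d=d1 and m=m and lam=lam])
      show "p1 < \<Omega> \<Longrightarrow> (\<forall>n. d1 n \<le> p1) \<and> ((\<exists>y. y<p1) \<longrightarrow> (\<forall>n. d1 n < p1)) \<and> (\<forall>c<p1. \<exists>N. \<forall>n\<ge>N. c \<le> d1 n)"
        by (rule d1)
      show "fst (z n) \<in> Nb p1 (if p1 = \<Omega> then m n else d1 n)" for n
        using zS(2)[of n] unfolding box_def mem_Times_iff by (rule conjunct1)
      show "fst (z n) \<le> m (Suc n)" for n by (rule zle1)
      show "m n \<le> m (Suc n)" for n by (rule mmono)
      show "m n \<le> lam" for n using lam by blast
      show "lam \<le> v" if "\<forall>n. m n \<le> v" for v using lamleast that by blast
      show "open U1" by (rule U(1))
      have "fst q \<in> U1" using U(3) by (simp add: mem_Times_iff)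
      then show "(if p1 = \<Omega> then lam else p1) \<in> U1" unfolding q_def fst_conv .
    qed
    then obtain N1 where N1: "\<forall>n\<ge>N1. fst (z n) \<in> U1" by blast
    have "\<exists>N. \<forall>n\<ge>N. snd (z n) \<in> U2"
    proof (rule coord_conv[where t=p2 and d=d2 and m=m and lam=lam])
      show "p2 < \<Omega> \<Longrightarrow> (\<forall>n. d2 n \<le> p2) \<and> ((\<exists>y. y<p2) \<longrightarrow> (\<forall>n. d2 n < p2)) \<and> (\<forall>c<p2. \<exists>N. \<forall>n\<ge>N. c \<le> d2 n)"
        by (rule d2)
      show "snd (z n) \<in> Nb p2 (if p2 = \<Omega> then m n else d2 n)" for n
        using zS(2)[of n] unfolding box_def mem_Times_iff by (rule conjunct2)
      show "snd (z n) \<le> m (Suc n)" for n by (rule zle2)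
      show "m n \<le> m (Suc n)" for n by (rule mmono)
      show "m n \<le> lam" for n using lam by blast
      show "lam \<le> v" if "\<forall>n. m n \<le> v" for v using lamleast that by blast
      show "open U2" by (rule U(2))
      have "snd q \<in> U2" using U(3) by (simp add: mem_Times_iff)
      then show "(if p2 = \<Omega> then lam else p2) \<in> U2" unfolding q_def snd_conv .
    qed
    then obtain N2 where N2: "\<forall>n\<ge>N2. snd (z n) \<in> U2" by blast
    have "z n \<in> U1 \<times> U2" if "n \<ge> N1 + N2" for n
      unfolding mem_Times_iff using N1 N2 that by simp
    then show ?thesis by blast
  qed
  have qA: "q \<in> closure A"
  proof (rule in_closureI)
    fix W assume W: "open W" "q \<in> W"
    obtain U1 U2 where U: "open U1" "open U2" "q \<in> U1 \<times> U2" "U1 \<times> U2 \<subseteq> W" by (rule open_prod_elim[OF W])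
    from conv[OF U(1-3)] obtain N where N: "\<forall>n\<ge>N. z n \<in> U1 \<times> U2" by blast
    have "N \<le> 2*N" by simp
    then have "z (2*N) \<in> U1 \<times> U2" using N by blast
    then have zW: "z (2*N) \<in> W" using U(4) by (rule subsetD[rotated])
    have zX: "z (2*N) \<in> A" using zS(1)[of "2*N"] by (simp add: S_def)
    show "W \<inter> A \<noteq> {}" using IntI[OF zW zX] by (metis empty_iff)
  qed
  have qB: "q \<in> closure B"
  proof (rule in_closureI)
    fix W assume W: "open W" "q \<in> W"
    obtain U1 U2 where U: "open U1" "open U2" "q \<in> U1 \<times> U2" "U1 \<times> U2 \<subseteq> W" by (rule open_prod_elim[OF W])
    from conv[OF U(1-3)] obtain N where N: "\<forall>n\<ge>N. z n \<in> U1 \<times> U2" by blast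
    have "N \<le> 2*N+1" by simp
    then have "z (2*N+1) \<in> U1 \<times> U2" using N by blast
    then have zW: "z (2*N+1) \<in> W" using U(4) by (rule subsetD[rotated])
    have zX: "z (2*N+1) \<in> B" using zS(1)[of "2*N+1"] by (simp add: S_def)
    show "W \<inter> B \<noteq> {}" using IntI[OF zW zX] by (metis empty_iff)
  qed
  have "q \<in> A" using qA qX cA by (meson IntI subsetD)
  moreover have "q \<in> B" using qB qX cB by (meson IntI subsetD)
  ultimately show False using AB by (meson disjoint_iff)
qed

end


lemma normal_union:
  assumes nS: "normal_space (subtopology Y S)" and nT: "normal_space (subtopology Y T)"
    and oS: "openin Y S" and oT: "openin Y T" and top: "topspace Y = S \<union> T" and dj: "S \<inter> T = {}"
  shows "normal_space Y"
  unfolding normal_space_def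
proof (intro allI impI, elim conjE)
  fix A B assume A: "closedin Y A" and B: "closedin Y B" and AB: "disjnt A B"
  have cl: "closedin (subtopology Y R) (C \<inter> R)" if "closedin Y C" for C R
    unfolding closedin_subtopology using that by blast
  have djS: "disjnt (A \<inter> S) (B \<inter> S)" "disjnt (A \<inter> T) (B \<inter> T)" using AB by (auto simp: disjnt_def)
  obtain U1 V1 where UV1: "openin (subtopology Y S) U1" "openin (subtopology Y S) V1"
      "A \<inter> S \<subseteq> U1" "B \<inter> S \<subseteq> V1" "disjnt U1 V1"
    using nS cl[OF A] cl[OF B] djS(1) unfolding normal_space_def by meson
  obtain U2 V2 where UV2: "openin (subtopology Y T) U2" "openin (subtopology Y T) V2"
      "A \<inter> T \<subseteq> U2" "B \<inter> T \<subseteq> V2" "disjnt U2 V2"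
    using nT cl[OF A] cl[OF B] djS(2) unfolding normal_space_def by meson
  have sub: "U1 \<subseteq> S" "V1 \<subseteq> S" "U2 \<subseteq> T" "V2 \<subseteq> T"
    using UV1(1,2) UV2(1,2) openin_subset by fastforce+
  have "openin Y U1" "openin Y V1" "openin Y U2" "openin Y V2"
    using openin_trans_full UV1 UV2 oS oT by blast+
  moreover have "A \<subseteq> U1 \<union> U2" "B \<subseteq> V1 \<union> V2"
    using closedin_subset[OF A] closedin_subset[OF B] top UV1(3,4) UV2(3,4) by blast+
  moreover have "disjnt (U1 \<union> U2) (V1 \<union> V2)"
    using sub dj UV1(5) UV2(5) by (auto simp: disjnt_def)
  ultimately show "\<exists>U V. openin Y U \<and> openin Y V \<and> A \<subseteq> U \<and> B \<subseteq> V \<and> disjnt U V"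
    by (meson openin_Un)
qed


context omg begin

lemma normal_eu: "normal_space (euclidean :: ('a\<times>'a) topology)"
  by (rule compact_Hausdorff_or_regular_imp_normal_space[OF compact_X]) (simp add: Hausdorff_eu)

lemma normal_X3: "normal_space (subtopology euclidean (L \<times> L))"
  unfolding normal_space_def
proof (intro allI impI, elim conjE)
  fix S T assume S: "closedin (subtopology euclidean (L \<times> L)) S" and T: "closedin (subtopology euclidean (L \<times> L)) T"
    and ST: "disjnt S T"
  from S[unfolded closedin_subtopology] obtain CS where CS0: "closedin euclidean CS" "S = CS \<inter> (L \<times> L)" by (elim exE conjE)
  from T[unfolded closedin_subtopology] obtain CT where CT0: "closedin euclidean CT" "T = CT \<inter> (L \<times> L)" by (elim exE conjE)
  have CS: "closed CS" "S = CS \<inter> (L \<times> L)" using CS0 by simp_all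
  have CT: "closed CT" "T = CT \<inter> (L \<times> L)" using CT0 by simp_all
  have cS: "closure S \<subseteq> CS" using CS by (intro closure_minimal) simp_all
  have cT: "closure T \<subseteq> CT" using CT by (intro closure_minimal) simp_all
  have "closure S \<inter> closure T = {}"
  proof (rule key)
    show "S \<subseteq> L \<times> L" "T \<subseteq> L \<times> L" using CS CT by auto
    show "S \<inter> T = {}" using ST by (simp add: disjnt_def)
    show "closure S \<inter> (L \<times> L) \<subseteq> S" using cS CS(2) by auto
    show "closure T \<inter> (L \<times> L) \<subseteq> T" using cT CT(2) by auto
  qed
  then have "disjnt (closure S) (closure T)" by (simp add: disjnt_def)
  then have "\<exists>U V. openin euclidean U \<and> openin euclidean V \<and> closure S \<subseteq> U \<and> closure T \<subseteq> V \<and> disjnt U V"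
    using normal_eu[unfolded normal_space_def, rule_format, of "closure S" "closure T"] by simp
  then obtain U V where UV0: "openin euclidean U" "openin euclidean V" "closure S \<subseteq> U" "closure T \<subseteq> V" "disjnt U V"
    by (elim exE conjE)
  have UV: "open U" "open V" "closure S \<subseteq> U" "closure T \<subseteq> V" "disjnt U V" using UV0 by simp_all
  have "openin (subtopology euclidean (L \<times> L)) (U \<inter> (L \<times> L))" "openin (subtopology euclidean (L \<times> L)) (V \<inter> (L \<times> L))"
    unfolding openin_subtopology using UV(1,2) by (simp_all add: exI[of _ U] exI[of _ V])
  moreover have "S \<subseteq> U \<inter> (L \<times> L)" "T \<subseteq> V \<inter> (L \<times> L)"
    using UV(3,4) closure_subset[of S] closure_subset[of T] CS(2) CT(2) by auto
  moreover have "disjnt (U \<inter> (L \<times> L)) (V \<inter> (L \<times> L))" using UV(5) by (auto simp: disjnt_def)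
  ultimately show "\<exists>U V. openin (subtopology euclidean (L \<times> L)) U \<and> openin (subtopology euclidean (L \<times> L)) V \<and> S \<subseteq> U \<and> T \<subseteq> V \<and> disjnt U V"
    by (intro exI conjI)
qed

lemma normal_pt: "normal_space (subtopology (euclidean :: ('a\<times>'a) topology) {p})"
proof -
  have "subtopology (euclidean :: ('a\<times>'a) topology) {p} = discrete_topology {p}"
    by (simp add: subtopology_eq_discrete_topology_sing)
  then show ?thesis by (simp add: normal_space_discrete_topology)
qed

lemma normal_L: "normal_space (subtopology (euclidean :: 'a topology) L)"
proof -
  obtain a0 where a0: "a0 < \<Omega>" using ex_below by blast
  have "closedin (subtopology euclidean (L \<times> L)) ({a0} \<times> L)"
    unfolding closedin_subtopology
    by (rule exI[of _ "{a0} \<times> UNIV"]) (use a0 in \<open>auto simp: closed_Times\<close>)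
  from normal_space_closed_subtopology[OF normal_X3 this]
  have "normal_space (subtopology euclidean ({a0} \<times> L))"
    by (simp add: subtopology_subtopology Times_Int_Times a0)
  then have "normal_space (prod_topology (subtopology euclidean {a0}) (subtopology euclidean L))"
    by simp
  moreover have "subtopology euclidean L homeomorphic_space prod_topology (subtopology euclidean {a0}) (subtopology euclidean L)"
    by (rule homeomorphic_space_prod_topology_sing2) simp
  ultimately show ?thesis using homeomorphic_normal_space by blast
qed

lemma normal_X2: "normal_space (subtopology (euclidean :: ('a\<times>'a) topology) (({\<Omega>} \<times> L) \<union> (L \<times> {\<Omega>})))"
proof (rule normal_union[where S="{\<Omega>} \<times> L" and T="L \<times> {\<Omega>}"])
  let ?Y = "subtopology (euclidean :: ('a\<times>'a) topology) (({\<Omega>} \<times> L) \<union> (L \<times> {\<Omega>}))"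
  have hS: "subtopology euclidean L homeomorphic_space prod_topology (subtopology euclidean {\<Omega>}) (subtopology euclidean L)"
    by (rule homeomorphic_space_prod_topology_sing2) simp
  have hT: "subtopology euclidean L homeomorphic_space prod_topology (subtopology euclidean L) (subtopology euclidean {\<Omega>})"
    by (rule homeomorphic_space_prod_topology_sing1) simp
  have "normal_space (prod_topology (subtopology euclidean {\<Omega>}) (subtopology euclidean L))"
    using hS normal_L homeomorphic_normal_space by blast
  then show "normal_space (subtopology ?Y ({\<Omega>} \<times> L))"
    by (simp add: subtopology_subtopology Int_absorb1)
  have "normal_space (prod_topology (subtopology euclidean L) (subtopology euclidean {\<Omega>}))"
    using hT normal_L homeomorphic_normal_space by blast
  then show "normal_space (subtopology ?Y (L \<times> {\<Omega>}))"
    by (simp add: subtopology_subtopology Int_absorb1)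
  have e1: "{\<Omega>} \<times> L = (UNIV \<times> {..<\<Omega>}) \<inter> (({\<Omega>} \<times> L) \<union> (L \<times> {\<Omega>}))" by auto
  show "openin ?Y ({\<Omega>} \<times> L)"
    unfolding openin_subtopology by (rule exI[of _ "UNIV \<times> {..<\<Omega>}"]) (use e1 in \<open>auto simp: open_Times\<close>)
  have e2: "L \<times> {\<Omega>} = ({..<\<Omega>} \<times> UNIV) \<inter> (({\<Omega>} \<times> L) \<union> (L \<times> {\<Omega>}))" by auto
  show "openin ?Y (L \<times> {\<Omega>})"
    unfolding openin_subtopology by (rule exI[of _ "{..<\<Omega>} \<times> UNIV"]) (use e2 in \<open>auto simp: open_Times\<close>)
  show "topspace ?Y = {\<Omega>} \<times> L \<union> L \<times> {\<Omega>}" by simp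
  show "({\<Omega>} \<times> L) \<inter> (L \<times> {\<Omega>}) = {}" by auto
qed

end


lemma cont_ind:
  assumes "open C" "closed C"
  shows "continuous_map euclidean euclideanreal (\<lambda>x. if x \<in> C then (1::real) else 0)"
  unfolding continuous_map_def
proof (intro conjI allI impI)
  show "(\<lambda>x. if x \<in> C then (1::real) else 0) \<in> topspace euclidean \<rightarrow> topspace euclideanreal" by simp
next
  fix V :: "real set" assume "openin euclideanreal V"
  have e: "{x \<in> topspace euclidean. (if x \<in> C then (1::real) else 0) \<in> V} =
     (if 1 \<in> V then C else {}) \<union> (if 0 \<in> V then - C else {})" by auto
  have "open ((if 1 \<in> V then C else {}) \<union> (if 0 \<in> V then - C else {}))"
    using assms by (intro open_Un) (auto simp: open_Compl)
  then show "openin euclidean {x \<in> topspace euclidean. (if x \<in> C then (1::real) else 0) \<in> V}"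
    unfolding e by simp
qed

context omg begin

definition sf :: "(('a\<times>'a) \<Rightarrow> real) \<Rightarrow> (('a\<times>'a) \<Rightarrow> real) \<Rightarrow> (('a\<times>'a) \<Rightarrow> real) \<Rightarrow> ('a\<times>'a)\<times>sheet \<Rightarrow> real" where
  "sf gD gU gN p = (case snd p of Dot \<Rightarrow> gD (fst p) | Up \<Rightarrow> gU (fst p) | Down \<Rightarrow> gN (fst p))"

definition lift :: "(('a\<times>'a)\<times>sheet \<Rightarrow> real) \<Rightarrow> (('a\<times>'a)\<times>sheet) set \<Rightarrow> real" where
  "lift F c = F (SOME p. p \<in> c)"

definition compat :: "(('a\<times>'a) \<Rightarrow> real) \<Rightarrow> (('a\<times>'a) \<Rightarrow> real) \<Rightarrow> (('a\<times>'a) \<Rightarrow> real) \<Rightarrow> bool" where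
  "compat gD gU gN \<longleftrightarrow> (\<forall>x. fst x = \<Omega> \<longrightarrow> gD x = gU x) \<and> (\<forall>x. snd x = \<Omega> \<longrightarrow> gD x = gN x)"

lemma sf_rel: assumes "compat gD gU gN" "rel p p'" shows "sf gD gU gN p = sf gD gU gN p'"
proof -
  obtain x s where p: "p = (x,s)" by (cases p)
  obtain x' s' where p': "p' = (x',s')" by (cases p')
  have xx: "x' = x" using assms(2) unfolding p p' by (simp add: rel_iff)
  have r: "s = s' \<or> x = (\<Omega>,\<Omega>) \<or> (fst x = \<Omega> \<and> s\<in>{Dot,Up} \<and> s'\<in>{Dot,Up}) \<or> (snd x = \<Omega> \<and> s\<in>{Dot,Down} \<and> s'\<in>{Dot,Down})"
    using assms(2) unfolding p p' by (simp add: rel_iff)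
  have c1: "fst x = \<Omega> \<Longrightarrow> gD x = gU x" and c2: "snd x = \<Omega> \<Longrightarrow> gD x = gN x"
    using assms(1) unfolding compat_def by blast+
  show ?thesis unfolding p p' xx sf_def using r c1 c2
    by (cases s; cases s') auto
qed

lemma lift_cls: assumes "compat gD gU gN" shows "lift (sf gD gU gN) (cls p) = sf gD gU gN p"
proof -
  have ex: "\<exists>p'. p' \<in> cls p" unfolding sheet_class_def using rel_refl[of p] by blast
  have "(SOME p'. p' \<in> cls p) \<in> cls p" using someI_ex[OF ex] .
  then have "rel p (SOME p'. p' \<in> cls p)" by (simp add: sheet_class_def)
  then show ?thesis unfolding lift_def using sf_rel[OF assms] by metis
qed

lemma cont_sf:
  assumes "continuous_map euclidean euclideanreal gD" "continuous_map euclidean euclideanreal gU"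
    "continuous_map euclidean euclideanreal gN"
  shows "continuous_map Q euclideanreal (sf gD gU gN)"
  unfolding continuous_map_def
proof (intro conjI allI impI)
  show "sf gD gU gN \<in> topspace Q \<rightarrow> topspace euclideanreal" by simp
next
  fix V :: "real set" assume V: "openin euclideanreal V"
  have o: "open {x. g x \<in> V}" if "continuous_map euclidean euclideanreal g" for g :: "'a\<times>'a \<Rightarrow> real"
    using that V unfolding continuous_map_def by simp
  have e: "{p \<in> topspace Q. sf gD gU gN p \<in> V} =
     ({x. gD x \<in> V} \<times> {Dot}) \<union> ({x. gU x \<in> V} \<times> {Up}) \<union> ({x. gN x \<in> V} \<times> {Down})"
  proof (rule set_eqI)
    fix p :: "('a\<times>'a)\<times>sheet"
    obtain x s where p: "p = (x,s)" by (cases p)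
    show "p \<in> {p \<in> topspace Q. sf gD gU gN p \<in> V} \<longleftrightarrow>
      p \<in> ({x. gD x \<in> V} \<times> {Dot}) \<union> ({x. gU x \<in> V} \<times> {Up}) \<union> ({x. gN x \<in> V} \<times> {Down})"
      unfolding p by (cases s) (simp_all add: sf_def)
  qed
  show "openin Q {p \<in> topspace Q. sf gD gU gN p \<in> V}"
    unfolding e using o[OF assms(1)] o[OF assms(2)] o[OF assms(3)]
    by (intro openin_Un openQ)
qed

lemma cont_lift:
  assumes "compat gD gU gN" "continuous_map euclidean euclideanreal gD" "continuous_map euclidean euclideanreal gU"
    "continuous_map euclidean euclideanreal gN"
  shows "continuous_map (Ytop \<Omega>) euclideanreal (lift (sf gD gU gN))"
  unfolding Ytop_eq
proof (rule cont_from_quot)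
  have "(\<lambda>p. lift (sf gD gU gN) (cls p)) = sf gD gU gN" using lift_cls[OF assms(1)] by (rule ext)
  then show "continuous_map Q euclideanreal (\<lambda>p. lift (sf gD gU gN) (cls p))"
    using cont_sf[OF assms(2-4)] by simp
qed

lemma sum3:
  assumes "fst x < \<Omega>" "snd x < \<Omega>" "compat gD gU gN"
  shows "(\<Sum>y\<in>fiber (Ytop \<Omega>) proj x. \<mu> x y * lift (sf gD gU gN) y) =
     \<mu> x (cls (x,Dot)) * gD x + \<mu> x (cls (x,Up)) * gU x + \<mu> x (cls (x,Down)) * gN x"
  using fiber3[OF assms(1,2)] lift_cls[OF assms(3)] by (simp add: sf_def)

lemma sum2b:
  assumes "fst x < \<Omega>" "snd x = \<Omega>" "compat gD gU gN"
    "\<mu> x (cls (x,Dot)) = 1/2" "\<mu> x (cls (x,Up)) = 1/2"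
  shows "(\<Sum>y\<in>fiber (Ytop \<Omega>) proj x. \<mu> x y * lift (sf gD gU gN) y) = gD x / 2 + gU x / 2"
  using fiber2b[OF assms(1,2)] lift_cls[OF assms(3)] by (simp add: sf_def assms(4) assms(5))

lemma sum2a:
  assumes "fst x = \<Omega>" "snd x < \<Omega>" "compat gD gU gN"
    "\<mu> x (cls (x,Dot)) = 1/2" "\<mu> x (cls (x,Down)) = 1/2"
  shows "(\<Sum>y\<in>fiber (Ytop \<Omega>) proj x. \<mu> x y * lift (sf gD gU gN) y) = gD x / 2 + gN x / 2"
  using fiber2a[OF assms(1,2)] lift_cls[OF assms(3)] by (simp add: sf_def assms(4) assms(5))

end


lemma cont_at:
  assumes "continuous_map euclidean euclideanreal F" "e > 0"
  shows "\<exists>W. open W \<and> x0 \<in> W \<and> (\<forall>x\<in>W. \<bar>F x - F x0\<bar> < e)"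
proof -
  have h: "open U \<Longrightarrow> open {x. F x \<in> U}" for U using assms(1) unfolding continuous_map_def by simp
  have o: "open {x. F x \<in> ball (F x0) e}" by (rule h) (rule open_ball)
  show ?thesis
    by (rule exI[of _ "{x. F x \<in> ball (F x0) e}"]) (use o assms(2) in \<open>auto simp: dist_real_def abs_minus_commute\<close>)
qed

context omg begin

definition u :: "'a \<Rightarrow> 'a\<times>'a \<Rightarrow> real" where "u a x = (if x \<in> {..a} \<times> UNIV then 1 else 0)"
definition v :: "'a \<Rightarrow> 'a\<times>'a \<Rightarrow> real" where "v a x = (if x \<in> UNIV \<times> {..a} then 1 else 0)"

lemma u_cont: "a < \<Omega> \<Longrightarrow> continuous_map euclidean euclideanreal (u a)"
  unfolding u_def by (intro cont_ind open_Times closed_Times open_atMost_below) auto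

lemma v_cont: "a < \<Omega> \<Longrightarrow> continuous_map euclidean euclideanreal (v a)"
  unfolding v_def by (intro cont_ind open_Times closed_Times open_atMost_below) auto

lemma zero_cont: "continuous_map euclidean euclideanreal (\<lambda>x. 0::real)" by simp

lemma u_compat: "a < \<Omega> \<Longrightarrow> compat (\<lambda>x. 0) (u a) (\<lambda>x. 0)"
  unfolding compat_def u_def by (auto simp: mem_Times_iff)

lemma v_compat: "a < \<Omega> \<Longrightarrow> compat (\<lambda>x. 0) (\<lambda>x. 0) (v a)"
  unfolding compat_def v_def by (auto simp: mem_Times_iff)

context
  fixes \<mu> :: "'a\<times>'a \<Rightarrow> (('a\<times>'a)\<times>sheet) set \<Rightarrow> real"
  assumes wc: "weak_star_continuous (Ytop \<Omega>) Xtop proj \<mu>"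
    and h2: "\<forall>x\<in>({\<Omega>} \<times> L) \<union> (L \<times> {\<Omega>}). \<forall>y\<in>fiber (Ytop \<Omega>) proj x. \<mu> x y = 1/2"
begin

lemma wc': 
  assumes "compat gD gU gN" "continuous_map euclidean euclideanreal gD" "continuous_map euclidean euclideanreal gU"
    "continuous_map euclidean euclideanreal gN"
  shows "continuous_map euclidean euclideanreal (\<lambda>x. \<Sum>y\<in>fiber (Ytop \<Omega>) proj x. \<mu> x y * lift (sf gD gU gN) y)"
  using wc cont_lift[OF assms] unfolding weak_star_continuous_def Xtop_eq by blast

lemma Gb:
  assumes a: "a < \<Omega>" and e: "e > 0"
  shows "\<exists>g<\<Omega>. \<forall>y. g < y \<longrightarrow> y < \<Omega> \<longrightarrow> \<bar>\<mu> (a,y) (cls ((a,y),Up)) - 1/2\<bar> < e"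
proof -
  let ?F = "\<lambda>x. \<Sum>y\<in>fiber (Ytop \<Omega>) proj x. \<mu> x y * lift (sf (\<lambda>x. 0) (u a) (\<lambda>x. 0)) y"
  have Fc: "continuous_map euclidean euclideanreal ?F"
    by (rule wc'[OF u_compat[OF a] zero_cont u_cont[OF a] zero_cont])
  have x0: "(a,\<Omega>) \<in> ({\<Omega>} \<times> L) \<union> (L \<times> {\<Omega>})" using a by simp
  have m1: "\<mu> (a,\<Omega>) (cls ((a,\<Omega>),Dot)) = 1/2" "\<mu> (a,\<Omega>) (cls ((a,\<Omega>),Up)) = 1/2"
    using h2 x0 fiber2b(1)[of "(a,\<Omega>)"] a by auto
  have "?F (a,\<Omega>) = 0/2 + u a (a,\<Omega>)/2"
    by (rule sum2b) (use a m1 u_compat[OF a] in simp_all)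
  then have F0: "?F (a,\<Omega>) = 1/2" by (simp add: u_def)
  obtain W where W: "open W" "(a,\<Omega>) \<in> W" "\<forall>x\<in>W. \<bar>?F x - ?F (a,\<Omega>)\<bar> < e"
    using cont_at[OF Fc e] by blast
  obtain A B where AB: "open A" "open B" "(a,\<Omega>) \<in> A \<times> B" "A \<times> B \<subseteq> W"
    by (rule open_prod_elim[OF W(1,2)])
  have OB: "\<Omega> \<in> B" using AB(3) by simp
  obtain y0 where y0: "y0 < \<Omega>" using ex_below by blast
  obtain g where g: "g < \<Omega>" "{g<..\<Omega>} \<subseteq> B" using open_left[OF AB(2) OB y0] by blast
  have "\<bar>\<mu> (a,y) (cls ((a,y),Up)) - 1/2\<bar> < e" if y: "g < y" "y < \<Omega>" for y
  proof -
    have "(a,y) \<in> A \<times> B" using AB(3) g(2) y by auto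
    then have "(a,y) \<in> W" using AB(4) by (rule subsetD[rotated])
    then have "\<bar>?F (a,y) - 1/2\<bar> < e" using W(3) F0 by simp
    moreover have "?F (a,y) = \<mu> (a,y) (cls ((a,y),Up))"
      using sum3[of "(a,y)", OF _ _ u_compat[OF a]] a y by (simp add: u_def)
    ultimately show ?thesis by simp
  qed
  then show ?thesis using g(1) by blast
qed

lemma Gc:
  assumes a: "a < \<Omega>" and e: "e > 0"
  shows "\<exists>g<\<Omega>. \<forall>y. g < y \<longrightarrow> y < \<Omega> \<longrightarrow> \<bar>\<mu> (y,a) (cls ((y,a),Down)) - 1/2\<bar> < e"
proof -
  let ?F = "\<lambda>x. \<Sum>y\<in>fiber (Ytop \<Omega>) proj x. \<mu> x y * lift (sf (\<lambda>x. 0) (\<lambda>x. 0) (v a)) y"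
  have Fc: "continuous_map euclidean euclideanreal ?F"
    by (rule wc'[OF v_compat[OF a] zero_cont zero_cont v_cont[OF a]])
  have x0: "(\<Omega>,a) \<in> ({\<Omega>} \<times> L) \<union> (L \<times> {\<Omega>})" using a by simp
  have m1: "\<mu> (\<Omega>,a) (cls ((\<Omega>,a),Dot)) = 1/2" "\<mu> (\<Omega>,a) (cls ((\<Omega>,a),Down)) = 1/2"
    using h2 x0 fiber2a(1)[of "(\<Omega>,a)"] a by auto
  have "?F (\<Omega>,a) = 0/2 + v a (\<Omega>,a)/2"
    by (rule sum2a) (use a m1 v_compat[OF a] in simp_all)
  then have F0: "?F (\<Omega>,a) = 1/2" by (simp add: v_def)
  obtain W where W: "open W" "(\<Omega>,a) \<in> W" "\<forall>x\<in>W. \<bar>?F x - ?F (\<Omega>,a)\<bar> < e"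
    using cont_at[OF Fc e] by blast
  obtain A B where AB: "open A" "open B" "(\<Omega>,a) \<in> A \<times> B" "A \<times> B \<subseteq> W"
    by (rule open_prod_elim[OF W(1,2)])
  have OA: "\<Omega> \<in> A" using AB(3) by simp
  obtain y0 where y0: "y0 < \<Omega>" using ex_below by blast
  obtain g where g: "g < \<Omega>" "{g<..\<Omega>} \<subseteq> A" using open_left[OF AB(1) OA y0] by blast
  have "\<bar>\<mu> (y,a) (cls ((y,a),Down)) - 1/2\<bar> < e" if y: "g < y" "y < \<Omega>" for y
  proof -
    have "(y,a) \<in> A \<times> B" using AB(3) g(2) y by auto
    then have "(y,a) \<in> W" using AB(4) by (rule subsetD[rotated])
    then have "\<bar>?F (y,a) - 1/2\<bar> < e" using W(3) F0 by simp
    moreover have "?F (y,a) = \<mu> (y,a) (cls ((y,a),Down))"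
      using sum3[of "(y,a)", OF _ _ v_compat[OF a]] a y by (simp add: v_def)
    ultimately show ?thesis by simp
  qed
  then show ?thesis using g(1) by blast
qed

lemma Db:
  assumes d: "d < \<Omega>" and y0: "y0 < d" and e: "e > 0"
  shows "\<exists>r<d. \<forall>x1 x2. r < x1 \<longrightarrow> x1 \<le> d \<longrightarrow> r < x2 \<longrightarrow> x2 \<le> d \<longrightarrow>
      \<bar>\<mu> (x1,x2) (cls ((x1,x2),Up)) - \<mu> (d,d) (cls ((d,d),Up))\<bar> < e"
proof -
  let ?F = "\<lambda>x. \<Sum>y\<in>fiber (Ytop \<Omega>) proj x. \<mu> x y * lift (sf (\<lambda>x. 0) (u d) (\<lambda>x. 0)) y"
  have Fc: "continuous_map euclidean euclideanreal ?F"
    by (rule wc'[OF u_compat[OF d] zero_cont u_cont[OF d] zero_cont])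
  have Fv: "?F (x1,x2) = \<mu> (x1,x2) (cls ((x1,x2),Up))" if "x1 \<le> d" "x2 \<le> d" for x1 x2
    using sum3[of "(x1,x2)", OF _ _ u_compat[OF d]] d that by (simp add: u_def)
  obtain W where W: "open W" "(d,d) \<in> W" "\<forall>x\<in>W. \<bar>?F x - ?F (d,d)\<bar> < e"
    using cont_at[OF Fc e] by blast
  obtain A B where AB: "open A" "open B" "(d,d) \<in> A \<times> B" "A \<times> B \<subseteq> W"
    by (rule open_prod_elim[OF W(1,2)])
  have dA: "d \<in> A" and dB: "d \<in> B" using AB(3) by auto
  obtain r1 where r1: "r1 < d" "{r1<..d} \<subseteq> A" using open_left[OF AB(1) dA y0] by blast
  obtain r2 where r2: "r2 < d" "{r2<..d} \<subseteq> B" using open_left[OF AB(2) dB y0] by blast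
  have "\<bar>\<mu> (x1,x2) (cls ((x1,x2),Up)) - \<mu> (d,d) (cls ((d,d),Up))\<bar> < e"
    if x: "max r1 r2 < x1" "x1 \<le> d" "max r1 r2 < x2" "x2 \<le> d" for x1 x2
  proof -
    have "(x1,x2) \<in> A \<times> B" using r1(2) r2(2) x by auto
    then have "(x1,x2) \<in> W" using AB(4) by (rule subsetD[rotated])
    then have "\<bar>?F (x1,x2) - ?F (d,d)\<bar> < e" using W(3) by (rule bspec[rotated])
    then show ?thesis using Fv[OF x(2,4)] Fv[of d d] by simp
  qed
  then show ?thesis using r1(1) r2(1) by (intro exI[of _ "max r1 r2"]) auto
qed

lemma Dc:
  assumes d: "d < \<Omega>" and y0: "y0 < d" and e: "e > 0"
  shows "\<exists>r<d. \<forall>x1 x2. r < x1 \<longrightarrow> x1 \<le> d \<longrightarrow> r < x2 \<longrightarrow> x2 \<le> d \<longrightarrow>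
      \<bar>\<mu> (x1,x2) (cls ((x1,x2),Down)) - \<mu> (d,d) (cls ((d,d),Down))\<bar> < e"
proof -
  let ?F = "\<lambda>x. \<Sum>y\<in>fiber (Ytop \<Omega>) proj x. \<mu> x y * lift (sf (\<lambda>x. 0) (\<lambda>x. 0) (v d)) y"
  have Fc: "continuous_map euclidean euclideanreal ?F"
    by (rule wc'[OF v_compat[OF d] zero_cont zero_cont v_cont[OF d]])
  have Fv: "?F (x1,x2) = \<mu> (x1,x2) (cls ((x1,x2),Down))" if "x1 \<le> d" "x2 \<le> d" for x1 x2
    using sum3[of "(x1,x2)", OF _ _ v_compat[OF d]] d that by (simp add: v_def)
  obtain W where W: "open W" "(d,d) \<in> W" "\<forall>x\<in>W. \<bar>?F x - ?F (d,d)\<bar> < e"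
    using cont_at[OF Fc e] by blast
  obtain A B where AB: "open A" "open B" "(d,d) \<in> A \<times> B" "A \<times> B \<subseteq> W"
    by (rule open_prod_elim[OF W(1,2)])
  have dA: "d \<in> A" and dB: "d \<in> B" using AB(3) by auto
  obtain r1 where r1: "r1 < d" "{r1<..d} \<subseteq> A" using open_left[OF AB(1) dA y0] by blast
  obtain r2 where r2: "r2 < d" "{r2<..d} \<subseteq> B" using open_left[OF AB(2) dB y0] by blast
  have "\<bar>\<mu> (x1,x2) (cls ((x1,x2),Down)) - \<mu> (d,d) (cls ((d,d),Down))\<bar> < e"
    if x: "max r1 r2 < x1" "x1 \<le> d" "max r1 r2 < x2" "x2 \<le> d" for x1 x2
  proof -
    have "(x1,x2) \<in> A \<times> B" using r1(2) r2(2) x by auto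
    then have "(x1,x2) \<in> W" using AB(4) by (rule subsetD[rotated])
    then have "\<bar>?F (x1,x2) - ?F (d,d)\<bar> < e" using W(3) by (rule bspec[rotated])
    then show ?thesis using Fv[OF x(2,4)] Fv[of d d] by simp
  qed
  then show ?thesis using r1(1) r2(1) by (intro exI[of _ "max r1 r2"]) auto
qed

end
end


lemma small_zero: assumes "\<And>e::real. e > 0 \<Longrightarrow> \<bar>t\<bar> < e" shows "t = 0"
proof (rule ccontr)
  assume "t \<noteq> 0" then have "\<bar>t\<bar> > 0" by simp
  from assms[OF this] show False by simp
qed

context omg begin

context
  fixes \<mu> :: "'a\<times>'a \<Rightarrow> (('a\<times>'a)\<times>sheet) set \<Rightarrow> real"
  assumes pf: "prob_family (Ytop \<Omega>) Xtop proj \<mu>"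
    and wc: "weak_star_continuous (Ytop \<Omega>) Xtop proj \<mu>"
    and h2: "\<forall>x\<in>({\<Omega>} \<times> L) \<union> (L \<times> {\<Omega>}). \<forall>y\<in>fiber (Ytop \<Omega>) proj x. \<mu> x y = 1/2"
    and h3: "\<forall>x\<in>L \<times> L. \<forall>y\<in>fiber (Ytop \<Omega>) proj x. \<mu> x y > 0"
begin

lemma no_family: False
proof -
  define bU where "bU x = \<mu> x (cls (x,Up))" for x
  define cD where "cD x = \<mu> x (cls (x,Down))" for x
  define aD where "aD x = \<mu> x (cls (x,Dot))" for x
  define P where "P a e g \<longleftrightarrow> g < \<Omega> \<and> (\<forall>y. g < y \<longrightarrow> y < \<Omega> \<longrightarrow> \<bar>bU (a,y) - 1/2\<bar> < e)
       \<and> (\<forall>y. g < y \<longrightarrow> y < \<Omega> \<longrightarrow> \<bar>cD (y,a) - 1/2\<bar> < e)" for a e g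
  have Gex: "\<exists>g. P a e g" if a: "a < \<Omega>" and e: "e > 0" for a e
  proof -
    obtain g1 where g1: "g1 < \<Omega>" "\<forall>y. g1 < y \<longrightarrow> y < \<Omega> \<longrightarrow> \<bar>bU (a,y) - 1/2\<bar> < e"
      using Gb[OF wc h2 a e] unfolding bU_def by blast
    obtain g2 where g2: "g2 < \<Omega>" "\<forall>y. g2 < y \<longrightarrow> y < \<Omega> \<longrightarrow> \<bar>cD (y,a) - 1/2\<bar> < e"
      using Gc[OF wc h2 a e] unfolding cD_def by blast
    have "P a e (max g1 g2)" unfolding P_def using g1 g2 by auto
    then show ?thesis by blast
  qed
  define Gam where "Gam a e = (SOME g. P a e g)" for a e
  have Gam: "a < \<Omega> \<Longrightarrow> e > 0 \<Longrightarrow> P a e (Gam a e)" for a e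
    unfolding Gam_def by (rule someI_ex) (rule Gex)
  define ep where "ep n = 1 / (real n + 1)" for n :: nat
  have ep: "ep n > 0" for n by (simp add: ep_def)
  define nx where "nx a n = (SOME w. max a (Gam a (ep n)) < w \<and> w < \<Omega>)" for a n
  have nx: "a < \<Omega> \<Longrightarrow> max a (Gam a (ep n)) < nx a n \<and> nx a n < \<Omega>" for a n
  proof -
    assume a: "a < \<Omega>"
    have "max a (Gam a (ep n)) < \<Omega>" using a Gam[OF a ep[of n]] by (simp add: P_def)
    then have "\<exists>w. max a (Gam a (ep n)) < w \<and> w < \<Omega>" by (rule no_max)
    then show ?thesis unfolding nx_def by (rule someI_ex)
  qed
  obtain a0 where a0: "a0 < \<Omega>" using ex_below by blast
  define al where "al = rec_nat a0 (\<lambda>n a. nx a n)"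
  have al0: "al 0 = a0" and alS: "al (Suc n) = nx (al n) n" for n by (simp_all add: al_def)
  have allt: "al n < \<Omega>" for n
    by (induction n) (use a0 nx in \<open>auto simp: al0 alS\<close>)
  have alstep: "al n < al (Suc n)" "Gam (al n) (ep n) < al (Suc n)" for n
    using nx[OF allt[of n], of n] by (auto simp: alS)
  have PG: "P (al n) (ep n) (Gam (al n) (ep n))" for n by (rule Gam[OF allt ep])
  have hb: "\<bar>bU (al n, al (Suc n)) - 1/2\<bar> < ep n" for n
    using PG[of n] alstep(2)[of n] allt[of "Suc n"] unfolding P_def by blast
  have hc: "\<bar>cD (al (Suc n), al n) - 1/2\<bar> < ep n" for n
    using PG[of n] alstep(2)[of n] allt[of "Suc n"] unfolding P_def by blast
  have almono: "n \<le> m \<Longrightarrow> al n \<le> al m" for n m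
    using lift_Suc_mono_le[of al] alstep(1) by (meson less_imp_le)
  obtain ub where ub: "ub < \<Omega>" "\<forall>n. al n \<le> ub" using ctbl_bound[of al, OF allt] by blast
  define d where "d = (LEAST u. \<forall>n. al n \<le> u)"
  have dub: "\<forall>n. al n \<le> d" unfolding d_def by (rule LeastI[of _ ub]) (rule ub(2))
  have dleast: "(\<forall>n. al n \<le> v) \<Longrightarrow> d \<le> v" for v unfolding d_def by (rule Least_le)
  have dlt: "d < \<Omega>" using dleast[OF ub(2)] ub(1) by simp
  have ald: "al n < d" for n using alstep(1)[of n] dub by (meson less_le_trans)
  have cof: "\<exists>N. r < al N" if "r < d" for r
  proof (rule ccontr)
    assume "\<not> ?thesis" then have "\<forall>n. al n \<le> r" by (simp add: not_less)
    then have "d \<le> r" by (rule dleast)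
    then show False using that by simp
  qed
  have small: "\<exists>N. ep N < e" if epos: "e > 0" for e
  proof -
    obtain N where "inverse (of_nat (Suc N)) < e" using reals_Archimedean[OF epos] by blast
    then show ?thesis by (intro exI[of _ N]) (simp add: ep_def divide_inverse add.commute)
  qed
  have epmono: "N \<le> n \<Longrightarrow> ep n \<le> ep N" for N n
    unfolding ep_def by (simp add: frac_le)
  have bd: "bU (d,d) = 1/2"
  proof -
    have "\<bar>bU (d,d) - 1/2\<bar> < e" if e: "e > 0" for e
    proof -
      have e2: "e/2 > 0" using e by simp
      obtain r where r: "r < d" "\<forall>x1 x2. r < x1 \<longrightarrow> x1 \<le> d \<longrightarrow> r < x2 \<longrightarrow> x2 \<le> d \<longrightarrow>
          \<bar>bU (x1,x2) - bU (d,d)\<bar> < e/2"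
        using Db[OF wc h2 dlt ald[of 0] e2] unfolding bU_def by blast
      obtain N1 where N1: "r < al N1" using cof[OF r(1)] by blast
      obtain N2 where N2: "ep N2 < e/2" using small[OF e2] by blast
      define n where "n = N1 + N2"
      have "r < al n" using N1 almono[of N1 n] by (simp add: n_def)
      moreover have "r < al (Suc n)" using N1 almono[of N1 "Suc n"] by (simp add: n_def)
      ultimately have "\<bar>bU (al n, al (Suc n)) - bU (d,d)\<bar> < e/2"
        using r(2) dub by blast
      moreover have "\<bar>bU (al n, al (Suc n)) - 1/2\<bar> < e/2"
        using hb[of n] epmono[of N2 n] N2 by (simp add: n_def)
      ultimately show ?thesis by linarith
    qed
    then show ?thesis using small_zero[of "bU (d,d) - 1/2"] by simp
  qed
  have cd: "cD (d,d) = 1/2"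
  proof -
    have "\<bar>cD (d,d) - 1/2\<bar> < e" if e: "e > 0" for e
    proof -
      have e2: "e/2 > 0" using e by simp
      obtain r where r: "r < d" "\<forall>x1 x2. r < x1 \<longrightarrow> x1 \<le> d \<longrightarrow> r < x2 \<longrightarrow> x2 \<le> d \<longrightarrow>
          \<bar>cD (x1,x2) - cD (d,d)\<bar> < e/2"
        using Dc[OF wc h2 dlt ald[of 0] e2] unfolding cD_def by blast
      obtain N1 where N1: "r < al N1" using cof[OF r(1)] by blast
      obtain N2 where N2: "ep N2 < e/2" using small[OF e2] by blast
      define n where "n = N1 + N2"
      have "r < al n" using N1 almono[of N1 n] by (simp add: n_def)
      moreover have "r < al (Suc n)" using N1 almono[of N1 "Suc n"] by (simp add: n_def)
      ultimately have "\<bar>cD (al (Suc n), al n) - cD (d,d)\<bar> < e/2"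
        using r(2) dub by blast
      moreover have "\<bar>cD (al (Suc n), al n) - 1/2\<bar> < e/2"
        using hc[of n] epmono[of N2 n] N2 by (simp add: n_def)
      ultimately show ?thesis by linarith
    qed
    then show ?thesis using small_zero[of "cD (d,d) - 1/2"] by simp
  qed
  have dd: "fst (d,d) < \<Omega>" "snd (d,d) < \<Omega>" using dlt by simp_all
  have sum1: "(\<Sum>y\<in>fiber (Ytop \<Omega>) proj (d,d). \<mu> (d,d) y) = 1"
    using pf unfolding prob_family_def Xtop_eq by simp
  have "aD (d,d) + bU (d,d) + cD (d,d) = 1"
    using sum1 fiber3[OF dd] by (simp add: aD_def bU_def cD_def add.assoc)
  then have "aD (d,d) = 0" using bd cd by simp
  moreover have "aD (d,d) > 0"
    using h3 fiber3(2)[OF dd] dlt unfolding aD_def by auto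
  ultimately show False by simp
qed

end
end


theorem mainTheorem6:
  fixes \<Omega> :: "'a::{wellorder,linorder_topology}"
  assumes "is_first_uncountable_top \<Omega>"
  defines "X2 \<equiv> ({\<Omega>} \<times> {x. x < \<Omega>}) \<union> ({x. x < \<Omega>} \<times> {\<Omega>})"
      and "X3 \<equiv> {x. x < \<Omega>} \<times> {x. x < \<Omega>}"
  shows "branched_cover (Ytop \<Omega>) Xtop proj
    \<and> card (fiber (Ytop \<Omega>) proj (\<Omega>, \<Omega>)) = 1
    \<and> (\<forall>x\<in>X2. card (fiber (Ytop \<Omega>) proj x) = 2)
    \<and> (\<forall>x\<in>X3. card (fiber (Ytop \<Omega>) proj x) = 3)
    \<and> normal_space (subtopology Xtop {(\<Omega>, \<Omega>)})
    \<and> normal_space (subtopology Xtop X2)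
    \<and> normal_space (subtopology Xtop X3)
    \<and> \<not> (\<exists>\<mu>. prob_family (Ytop \<Omega>) Xtop proj \<mu>
            \<and> weak_star_continuous (Ytop \<Omega>) Xtop proj \<mu>
            \<and> (\<forall>x\<in>X2. \<forall>y\<in>fiber (Ytop \<Omega>) proj x. \<mu> x y = 1/2)
            \<and> (\<forall>y\<in>fiber (Ytop \<Omega>) proj (\<Omega>, \<Omega>). \<mu> (\<Omega>, \<Omega>) y = 1)
            \<and> (\<forall>x\<in>X3. \<forall>y\<in>fiber (Ytop \<Omega>) proj x. \<mu> x y > 0))"
proof -
  interpret O: omg \<Omega> by (rule omg.intro) (fact assms(1))
  have c1: "card (fiber (Ytop \<Omega>) proj (\<Omega>, \<Omega>)) = 1" by (simp add: O.fiber1)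
  have c2: "\<forall>x\<in>X2. card (fiber (Ytop \<Omega>) proj x) = 2"
  proof
    fix x assume "x \<in> X2"
    then have "(fst x = \<Omega> \<and> snd x < \<Omega>) \<or> (fst x < \<Omega> \<and> snd x = \<Omega>)" unfolding X2_def by auto
    then show "card (fiber (Ytop \<Omega>) proj x) = 2"
    proof
      assume h: "fst x = \<Omega> \<and> snd x < \<Omega>"
      show ?thesis using O.fiber2a[of x] h by simp
    next
      assume h: "fst x < \<Omega> \<and> snd x = \<Omega>"
      show ?thesis using O.fiber2b[of x] h by simp
    qed
  qed
  have c3: "\<forall>x\<in>X3. card (fiber (Ytop \<Omega>) proj x) = 3"
    unfolding X3_def using O.fiber3(1) by auto
  have n1: "normal_space (subtopology Xtop {(\<Omega>, \<Omega>)})" unfolding Xtop_eq by (rule O.normal_pt)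
  have n2: "normal_space (subtopology Xtop X2)" unfolding Xtop_eq X2_def by (rule O.normal_X2)
  have n3: "normal_space (subtopology Xtop X3)" unfolding Xtop_eq X3_def by (rule O.normal_X3)
  have nf: "\<not> (\<exists>\<mu>. prob_family (Ytop \<Omega>) Xtop proj \<mu>
            \<and> weak_star_continuous (Ytop \<Omega>) Xtop proj \<mu>
            \<and> (\<forall>x\<in>X2. \<forall>y\<in>fiber (Ytop \<Omega>) proj x. \<mu> x y = 1/2)
            \<and> (\<forall>y\<in>fiber (Ytop \<Omega>) proj (\<Omega>, \<Omega>). \<mu> (\<Omega>, \<Omega>) y = 1)
            \<and> (\<forall>x\<in>X3. \<forall>y\<in>fiber (Ytop \<Omega>) proj x. \<mu> x y > 0))"
  proof
    assume "\<exists>\<mu>. prob_family (Ytop \<Omega>) Xtop proj \<mu>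
            \<and> weak_star_continuous (Ytop \<Omega>) Xtop proj \<mu>
            \<and> (\<forall>x\<in>X2. \<forall>y\<in>fiber (Ytop \<Omega>) proj x. \<mu> x y = 1/2)
            \<and> (\<forall>y\<in>fiber (Ytop \<Omega>) proj (\<Omega>, \<Omega>). \<mu> (\<Omega>, \<Omega>) y = 1)
            \<and> (\<forall>x\<in>X3. \<forall>y\<in>fiber (Ytop \<Omega>) proj x. \<mu> x y > 0)"
    then obtain \<mu> where m: "prob_family (Ytop \<Omega>) Xtop proj \<mu>" "weak_star_continuous (Ytop \<Omega>) Xtop proj \<mu>"
      "\<forall>x\<in>X2. \<forall>y\<in>fiber (Ytop \<Omega>) proj x. \<mu> x y = 1/2"
      "\<forall>x\<in>X3. \<forall>y\<in>fiber (Ytop \<Omega>) proj x. \<mu> x y > 0" by blast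
    show False by (rule O.no_family[OF m(1) m(2) m(3)[unfolded X2_def] m(4)[unfolded X3_def]])
  qed
  show ?thesis using O.branched c1 c2 c3 n1 n2 n3 nf by blast
qed

end
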